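(* Let the delays $\tau_{i,k}$, $i,k\in\{1,2,3\}$, be independent real random variables each having a continuous (density) distribution, and let $|h_{1,1}|,|h_{2,2}|,|h_{3,3}|>0$ and $\sigma_1^2,\sigma_2^2,\sigma_3^2>0$ be fixed. Set $S=\tau_{1,3}-\tau_{1,2}+\tau_{2,1}-\tau_{2,3}+\tau_{3,2}-\tau_{3,1}$, $\Delta f_{\min}=1/S$, $\Delta\tau_1=-\tau_{1,1}+\tau_{2,1}-\tau_{2,3}+\tau_{1,3}$, $\Delta\tau_2=-\tau_{2,2}+\tau_{2,3}-\tau_{1,3}+\tau_{1,2}$, $\Delta\tau_3=-\tau_{3,3}+\tau_{3,2}-\tau_{1,2}+\tau_{1,3}$, and for a positive integer $n$ $$R(n)=\sum_{i=1}^{3}\log_2\!\left(1+\frac{|h_{i,i}|^2\sin^2\!\big(\pi n\,\Delta f_{\min}\Delta\tau_i\big)}{\sigma_i^2}\right).$$ Then almost surely, for every $\epsilon>0$ there exists a positive integer $n$ with $$R(n)\ \ge\ \sum_{i=1}^{3}\log_2\!\left(1+\frac{|h_{i,i}|^2}{\sigma_i^2}\right)-\epsilon,$$ i.e. the upper bound $\sum_i\log_2(1+|h_{i,i}|^2/\sigma_i^2)$ on the sum-rate is approached arbitrarily closely by choosing the subcarrier spacing $\Delta f=n\Delta f_{\min}$ with sufficiently large available bandwidth.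
   Context: Setting: three-user-pair line-of-sight interference channel with single antennas and two subcarriers at spacing $\Delta f=f^{(2)}-f^{(1)}=n\Delta f_{\min}$, for which interference alignment is feasible. With optimal amplitude choice of the precoders and receive filters, the effective direct channel of pair $i$ under this interference alignment scheme has amplitude $|\bar h_i|=|h_{i,i}|\,|\sin(\pi n\Delta f_{\min}\Delta\tau_i)|\le|h_{i,i}|$, where $|h_{i,i}|$ is the amplitude and $\tau_{i,i}$ the delay of the direct channel of pair $i$; $\sigma_i^2$ is the noise variance at receiver $i$, and $R(n)$ is the resulting sum-rate. *)

theory Defs
  imports "HOL-Probability.Probability"
begin

text \<open>Delays are indexed tau i k for i, k in {1,2,3}.\<close>

definition S_sum :: "(nat \<Rightarrow> nat \<Rightarrow> real) \<Rightarrow> real" where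
  "S_sum t = t 1 3 - t 1 2 + t 2 1 - t 2 3 + t 3 2 - t 3 1"

definition df_min :: "(nat \<Rightarrow> nat \<Rightarrow> real) \<Rightarrow> real" where
  "df_min t = 1 / S_sum t"

definition dtau :: "(nat \<Rightarrow> nat \<Rightarrow> real) \<Rightarrow> nat \<Rightarrow> real" where
  "dtau t i = (if i = 1 then - t 1 1 + t 2 1 - t 2 3 + t 1 3
               else if i = 2 then - t 2 2 + t 2 3 - t 1 3 + t 1 2
               else - t 3 3 + t 3 2 - t 1 2 + t 1 3)"

text \<open>h i = |h_{i,i}|, s2 i = sigma_i^2.\<close>
definition sum_rate ::
  "(nat \<Rightarrow> real) \<Rightarrow> (nat \<Rightarrow> real) \<Rightarrow> (nat \<Rightarrow> nat \<Rightarrow> real) \<Rightarrow> nat \<Rightarrow> real" where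
  "sum_rate h s2 t n = (\<Sum>i\<in>{1,2,3}.
     log 2 (1 + (h i)\<^sup>2 * (sin (pi * real n * df_min t * dtau t i))\<^sup>2 / s2 i))"

definition rate_bound :: "(nat \<Rightarrow> real) \<Rightarrow> (nat \<Rightarrow> real) \<Rightarrow> real" where
  "rate_bound h s2 = (\<Sum>i\<in>{1,2,3}. log 2 (1 + (h i)\<^sup>2 / s2 i))"

end

theory Submission
  imports Defs "HOL-Analysis.Kronecker_Approximation_Theorem"
begin

lemma (in prob_space) no_atom_indep:
  fixes X Z :: "'a \<Rightarrow> real"
  assumes ind: "indep_var borel X borel Z" and dens: "distributed M lborel X f"
  shows "AE \<omega> in M. X \<omega> \<noteq> Z \<omega>"
proof -
  have Xm[measurable]: "X \<in> borel_measurable M" using indep_var_rv1[OF ind] by simp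
  have Zm[measurable]: "Z \<in> borel_measurable M" using indep_var_rv2[OF ind] by simp
  have fm[measurable]: "f \<in> borel_measurable lborel" using dens by (simp add: distributed_def)
  have dX: "distr M lborel X = density lborel f" using dens by (simp add: distributed_def)
  have null: "emeasure (distr M borel X) {z} = 0" for z
  proof -
    have "emeasure (distr M borel X) {z} = emeasure M (X -` {z} \<inter> space M)"
      by (rule emeasure_distr) auto
    also have "\<dots> = emeasure (distr M lborel X) {z}"
      by (rule emeasure_distr[symmetric]) auto
    also have "\<dots> = (\<integral>\<^sup>+ x. f x * indicator {z} x \<partial>lborel)"
      unfolding dX by (rule emeasure_density) auto
    also have "\<dots> = 0" by (rule nn_integral_null_set) auto
    finally show ?thesis .
  qed
  define D where "D = {p \<in> space (borel \<Otimes>\<^sub>M borel). fst p = (snd p::real)}"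
  have D[measurable]: "D \<in> sets (borel \<Otimes>\<^sub>M borel)" unfolding D_def by measurable
  have eqs: "{\<omega> \<in> space M. \<not> X \<omega> \<noteq> Z \<omega>} = (\<lambda>\<omega>. (X \<omega>, Z \<omega>)) -` D \<inter> space M"
    by (auto simp: D_def space_pair_measure)
  have "emeasure M ((\<lambda>\<omega>. (X \<omega>, Z \<omega>)) -` D \<inter> space M)
      = emeasure (distr M (borel \<Otimes>\<^sub>M borel) (\<lambda>\<omega>. (X \<omega>, Z \<omega>))) D"
    by (rule emeasure_distr[symmetric]) auto
  also have "\<dots> = emeasure (distr M borel X \<Otimes>\<^sub>M distr M borel Z) D"
    using ind unfolding indep_var_distribution_eq by simp
  also have "\<dots> = (\<integral>\<^sup>+ z. emeasure (distr M borel X) ((\<lambda>x. (x, z)) -` D) \<partial>distr M borel Z)"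
  proof -
    interpret X: prob_space "distr M borel X" by (rule prob_space_distr) simp
    interpret Z: prob_space "distr M borel Z" by (rule prob_space_distr) simp
    interpret pair_sigma_finite "distr M borel X" "distr M borel Z" ..
    show ?thesis by (rule emeasure_pair_measure_alt2) simp
  qed
  also have "\<dots> = (\<integral>\<^sup>+ z. 0 \<partial>distr M borel Z)"
  proof (rule nn_integral_cong)
    fix z
    have "(\<lambda>x. (x, z)) -` D = {z}" by (auto simp: D_def space_pair_measure)
    thus "emeasure (distr M borel X) ((\<lambda>x. (x, z)) -` D) = 0" using null by simp
  qed
  also have "\<dots> = 0" by simp
  finally show ?thesis
    by (subst AE_iff_measurable[OF _ eqs]) auto
qed

lemma (in prob_space) lin_nonzero:
  fixes X :: "'i \<Rightarrow> 'a \<Rightarrow> real" and w :: "'i \<Rightarrow> real"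
  assumes ind: "indep_vars (\<lambda>_. borel) X I" and fin: "finite I" and v: "v \<in> I"
    and dens: "distributed M lborel (X v) f" and wv: "w v \<noteq> 0"
  shows "AE \<omega> in M. (\<Sum>p\<in>I. w p * X p \<omega>) \<noteq> 0"
proof -
  define B where "B = I - {v}"
  define G where "G y = - (\<Sum>p\<in>B. w p * y p) / w v" for y :: "'i \<Rightarrow> real"
  have Gm: "G \<in> measurable (PiM B (\<lambda>_. borel)) borel"
    unfolding G_def B_def by measurable
  have Y1: "(\<lambda>y. y v) \<in> measurable (PiM {v} (\<lambda>_. borel)) (borel::real measure)"
    by measurable
  have "indep_var (PiM {v} (\<lambda>_. borel)) (\<lambda>\<omega>. restrict (\<lambda>i. X i \<omega>) {v})
      (PiM B (\<lambda>_. borel)) (\<lambda>\<omega>. restrict (\<lambda>i. X i \<omega>) B)"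
    by (rule indep_var_restrict[OF ind]) (use v in \<open>auto simp: B_def\<close>)
  from indep_var_compose[OF this Y1 Gm]
  have "indep_var borel (X v) borel (\<lambda>\<omega>. G (restrict (\<lambda>i. X i \<omega>) B))"
    by (simp add: o_def)
  from no_atom_indep[OF this dens]
  show ?thesis
  proof (rule eventually_mono)
    fix \<omega> assume ne: "X v \<omega> \<noteq> G (restrict (\<lambda>i. X i \<omega>) B)"
    have s: "(\<Sum>p\<in>I. w p * X p \<omega>) = w v * X v \<omega> + (\<Sum>p\<in>B. w p * X p \<omega>)"
      unfolding B_def using fin v by (simp add: sum.remove)
    have g: "G (restrict (\<lambda>i. X i \<omega>) B) = - (\<Sum>p\<in>B. w p * X p \<omega>) / w v"
      unfolding G_def by (simp cong: sum.cong)
    show "(\<Sum>p\<in>I. w p * X p \<omega>) \<noteq> 0"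
    proof
      assume "(\<Sum>p\<in>I. w p * X p \<omega>) = 0"
      hence "X v \<omega> = - (\<Sum>p\<in>B. w p * X p \<omega>) / w v" using s wv by (simp add: field_simps)
      thus False using ne g by simp
    qed
  qed
qed

lemma sin_sq_lower:
  fixes y \<delta> :: real and m :: int
  assumes "\<bar>y - of_int m - 1/2\<bar> < \<delta>"
  shows "(sin (pi * y))\<^sup>2 \<ge> 1 - (pi * \<delta>)\<^sup>2"
proof -
  define e where "e = y - of_int m - 1/2"
  have y: "pi * y = pi * (of_int m + 1/2) + pi * e" by (simp add: e_def algebra_simps)
  have c0: "cos (pi * (of_int m + 1/2)) = 0"
  proof -
    have "pi * (of_int m + 1/2) = of_int (2*m+1) * (pi/2)" by (simp add: field_simps)
    moreover have "odd (2*m+1)" by simp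
    ultimately show ?thesis unfolding cos_zero_iff_int by blast
  qed
  have s1: "(sin (pi * (of_int m + 1/2)))\<^sup>2 = 1" using c0 sin_cos_squared_add[of "pi * (of_int m + 1/2)"] by simp
  have "(sin (pi * y))\<^sup>2 = (cos (pi*e))\<^sup>2"
    unfolding y sin_add using c0 s1 by (simp add: power_mult_distrib)
  also have "\<dots> = 1 - (sin (pi*e))\<^sup>2" by (simp add: cos_squared_eq)
  finally have eq: "(sin (pi * y))\<^sup>2 = 1 - (sin (pi*e))\<^sup>2" .
  have ea: "\<bar>e\<bar> \<le> \<delta>" using assms by (simp add: e_def)
  have "\<bar>sin (pi*e)\<bar> \<le> pi * \<bar>e\<bar>" using abs_sin_x_le_abs_x[of "pi*e"] by (simp add: abs_mult)
  also have "\<dots> \<le> pi * \<delta>" using ea by (intro mult_left_mono) auto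
  finally have "\<bar>sin (pi*e)\<bar> \<le> pi * \<delta>" .
  hence "(sin (pi*e))\<^sup>2 \<le> (pi*\<delta>)\<^sup>2"
  proof -
    have "\<bar>sin (pi*e)\<bar>\<^sup>2 \<le> (pi*\<delta>)\<^sup>2" using \<open>\<bar>sin (pi*e)\<bar> \<le> pi * \<delta>\<close> by (intro power_mono) auto
    thus ?thesis by simp
  qed
  thus ?thesis using eq by simp
qed

lemma log_term_lower:
  fixes A u :: real
  assumes "A \<ge> 0" "0 < u" "u \<le> 1"
  shows "log 2 (1 + A * u) \<ge> log 2 (1 + A) + log 2 u"
proof -
  have "log 2 (1 + A) + log 2 u = log 2 ((1+A)*u)" using assms by (simp add: log_mult)
  also have "\<dots> \<le> log 2 (1 + A*u)"
  proof -
    have p1: "0 < (1+A)*u" using assms by (intro mult_pos_pos) auto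
    have "A*u \<ge> 0" using assms by simp
    hence p2: "0 < 1 + A*u" by linarith
    have "(1+A)*u \<le> 1 + A*u" using assms by (simp add: algebra_simps)
    thus ?thesis using p1 p2 by simp
  qed
  finally show ?thesis .
qed


lemma det:
  fixes t :: "nat \<Rightarrow> nat \<Rightarrow> real" and h s2 :: "nat \<Rightarrow> real" and \<epsilon> :: real
  assumes good: "\<And>a b c d::int. (a,b,c,d) \<noteq> (0,0,0,0) \<Longrightarrow>
      of_int a * S_sum t + of_int b * dtau t 1 + of_int c * dtau t 2 + of_int d * dtau t 3 \<noteq> 0"
    and hpos: "\<And>i. i \<in> {1,2,3} \<Longrightarrow> h i > 0" and spos: "\<And>i. i\<in>{1,2,3} \<Longrightarrow> s2 i > 0"
    and epos: "\<epsilon> > 0"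
  shows "\<exists>n::nat. n > 0 \<and> sum_rate h s2 t n \<ge> rate_bound h s2 - \<epsilon>"
proof -
  define S where "S = S_sum t"
  have S0: "S \<noteq> 0" using good[of 1 0 0 0] by (simp add: S_def)
  define \<theta> :: "nat \<Rightarrow> real" where "\<theta> i = (if i = 0 then dtau t 1 / S else if i = 1 then dtau t 2 / S
      else if i = 2 then dtau t 3 / S else 1)" for i
  have comb: "a = 0 \<and> b = 0 \<and> c = 0 \<and> d = 0"
    if "of_int a + of_int b * \<theta> 0 + of_int c * \<theta> 1 + of_int d * \<theta> 2 = 0" for a b c d :: int
  proof (rule ccontr)
    assume "\<not> ?thesis"
    hence "(a,b,c,d) \<noteq> (0,0,0,0)" by auto
    from good[OF this] have "of_int a * S + of_int b * dtau t 1 + of_int c * dtau t 2 + of_int d * dtau t 3 \<noteq> 0"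
      by (simp add: S_def)
    moreover have "of_int a * S + of_int b * dtau t 1 + of_int c * dtau t 2 + of_int d * dtau t 3
        = S * (of_int a + of_int b * \<theta> 0 + of_int c * \<theta> 1 + of_int d * \<theta> 2)"
      using S0 by (simp add: \<theta>_def field_simps)
    ultimately show False using that by simp
  qed
  have d01: "\<theta> 0 \<noteq> \<theta> 1" using comb[of 0 1 "-1" 0] by auto
  have d02: "\<theta> 0 \<noteq> \<theta> 2" using comb[of 0 1 0 "-1"] by auto
  have d12: "\<theta> 1 \<noteq> \<theta> 2" using comb[of 0 0 1 "-1"] by auto
  have d03: "\<theta> 0 \<noteq> \<theta> 3" using comb[of "-1" 1 0 0] by (auto simp: \<theta>_def)
  have d13: "\<theta> 1 \<noteq> \<theta> 3" using comb[of "-1" 0 1 0] by (auto simp: \<theta>_def)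
  have d23: "\<theta> 2 \<noteq> \<theta> 3" using comb[of "-1" 0 0 1] by (auto simp: \<theta>_def)
  have A3: "{..3::nat} = {0,1,2,3}" by auto
  have inj: "inj_on \<theta> {..3}"
    unfolding A3 using d01 d02 d12 d03 d13 d23 by (auto simp: inj_on_def)
  interpret Modules.module "(\<lambda>r. (*) (real_of_int r))"
    by (simp add: Modules.module.intro distrib_left mult.commute)
  have indp: "module.independent (\<lambda>r x. of_int r * x) (\<theta> ` {..3})"
    unfolding independent_explicit_module
  proof (intro allI impI)
    fix T u v assume T: "finite T" "T \<subseteq> \<theta> ` {..3}" "(\<Sum>v\<in>T. real_of_int (u v) * v) = 0" "v \<in> T"
    define u' where "u' w = (if w \<in> T then u w else 0)" for w
    have "(\<Sum>w\<in>\<theta>`{..3}. real_of_int (u' w) * w) = (\<Sum>w\<in>T. real_of_int (u' w) * w)"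
      by (rule sum.mono_neutral_right) (use T in \<open>auto simp: u'_def\<close>)
    also have "\<dots> = (\<Sum>w\<in>T. real_of_int (u w) * w)" by (rule sum.cong) (auto simp: u'_def)
    also have "\<dots> = 0" by fact
    finally have z: "(\<Sum>w\<in>\<theta>`{..3}. real_of_int (u' w) * w) = 0" .
    have "(\<Sum>w\<in>\<theta>`{..3}. real_of_int (u' w) * w) = (\<Sum>i\<le>3. real_of_int (u' (\<theta> i)) * \<theta> i)"
      by (simp add: sum.reindex[OF inj])
    also have "\<dots> = real_of_int (u' (\<theta> 3)) + real_of_int (u' (\<theta> 0)) * \<theta> 0
       + real_of_int (u' (\<theta> 1)) * \<theta> 1 + real_of_int (u' (\<theta> 2)) * \<theta> 2"
      unfolding A3 using d01 d02 d12 d03 d13 d23 by (simp add: \<theta>_def)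
    finally have "real_of_int (u' (\<theta> 3)) + real_of_int (u' (\<theta> 0)) * \<theta> 0
       + real_of_int (u' (\<theta> 1)) * \<theta> 1 + real_of_int (u' (\<theta> 2)) * \<theta> 2 = 0" using z by simp
    from comb[OF this] have all0: "\<forall>i\<le>3. u' (\<theta> i) = 0"
      by (metis One_nat_def le_Suc_eq le_zero_eq numeral_2_eq_2 numeral_3_eq_3)
    from T obtain i where i: "i \<le> 3" "v = \<theta> i" by auto
    show "u v = 0" using all0 i T(4) by (auto simp: u'_def)
  qed
  define c where "c = 2 powr (-\<epsilon>/3)"
  have c0: "0 < c" by (simp add: c_def)
  have c1: "c < 1" using powr_less_mono[of "-\<epsilon>/3" 0 2] epos by (simp add: c_def)
  define \<delta> where "\<delta> = min (sqrt (1-c)/pi) (1/2)"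
  have \<delta>0: "\<delta> > 0" using c1 by (simp add: \<delta>_def)
  obtain k m where km: "\<And>i. i < 3 \<Longrightarrow> \<bar>of_int k * \<theta> i - of_int (m i) - 1/2\<bar> < \<delta>"
    using Kronecker_thm_2[OF indp inj _ \<delta>0, of "\<lambda>_. 1/2"] by (auto simp: \<theta>_def)
  have k0: "k \<noteq> 0"
  proof
    assume "k = 0"
    with km[of 0] have hh: "\<bar>- of_int (m 0) - 1/2\<bar> < 1/(2::real)" unfolding \<delta>_def by auto
    have "m 0 \<ge> 0 \<or> m 0 \<le> -1" by auto
    hence "real_of_int (m 0) \<ge> 0 \<or> real_of_int (m 0) \<le> -1" by auto
    with hh show False by (auto simp: abs_if split: if_splits)
  qed
  define n where "n = nat \<bar>k\<bar>"
  have n0: "n > 0" using k0 by (simp add: n_def)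
  have sinb: "(sin (pi * real n * df_min t * dtau t i))\<^sup>2 \<ge> c" if i: "i \<in> {1,2,3}" for i
  proof -
    have th: "dtau t i / S = \<theta> (i - 1)" using i by (auto simp: \<theta>_def)
    have rn: "real n = of_int \<bar>k\<bar>" by (simp add: n_def)
    have "pi * real n * df_min t * dtau t i = pi * (of_int \<bar>k\<bar> * (dtau t i / S))"
      unfolding rn df_min_def S_def by simp
    also have "\<dots> = pi * (of_int \<bar>k\<bar> * \<theta> (i - 1))" by (simp only: th)
    finally have e1: "pi * real n * df_min t * dtau t i = pi * (of_int \<bar>k\<bar> * \<theta> (i - 1))" .
    have e2: "(sin (pi * (of_int \<bar>k\<bar> * \<theta> (i - 1))))\<^sup>2 = (sin (pi * (of_int k * \<theta> (i - 1))))\<^sup>2"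
    proof (cases "k \<ge> 0")
      case True thus ?thesis by simp
    next
      case False
      hence "of_int \<bar>k\<bar> = - (of_int k :: real)" by simp
      hence "pi * (of_int \<bar>k\<bar> * \<theta> (i - 1)) = - (pi * (of_int k * \<theta> (i - 1)))" by simp
      thus ?thesis by (simp only: sin_minus power2_minus)
    qed
    have "(sin (pi * (of_int k * \<theta> (i - 1))))\<^sup>2 \<ge> 1 - (pi*\<delta>)\<^sup>2"
    proof -
      have i3: "i - 1 < 3" using i by auto
      show ?thesis by (rule sin_sq_lower[OF km[OF i3]])
    qed
    moreover have "\<delta> \<le> sqrt (1-c)/pi" unfolding \<delta>_def by (rule min.cobounded1)
    hence "pi*\<delta> \<le> pi * (sqrt (1-c)/pi)" by (intro mult_left_mono) auto
    hence "pi*\<delta> \<le> sqrt (1-c)" by simp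
    hence "(pi*\<delta>)\<^sup>2 \<le> (sqrt (1-c))\<^sup>2" using \<delta>0
      by (intro power_mono) auto
    hence "(pi*\<delta>)\<^sup>2 \<le> 1 - c" using c1 by simp
    ultimately show ?thesis unfolding e1 e2 by linarith
  qed
  have trm: "log 2 (1 + (h i)\<^sup>2 * (sin (pi * real n * df_min t * dtau t i))\<^sup>2 / s2 i)
       \<ge> log 2 (1 + (h i)\<^sup>2 / s2 i) - \<epsilon>/3" if i: "i \<in> {1,2,3}" for i
  proof -
    define u where "u = (sin (pi * real n * df_min t * dtau t i))\<^sup>2"
    have u: "c \<le> u" "u \<le> 1" using sinb[OF i] by (auto simp: u_def abs_square_le_1)
    have A: "(h i)\<^sup>2 / s2 i \<ge> 0" using spos[OF i] by simp
    have "log 2 (1 + (h i)\<^sup>2 / s2 i * u) \<ge> log 2 (1 + (h i)\<^sup>2 / s2 i) + log 2 u"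
      by (rule log_term_lower[OF A]) (use u c0 in auto)
    moreover have "log 2 u \<ge> log 2 c" using u c0 by simp
    moreover have "log 2 c = -\<epsilon>/3" by (simp add: c_def)
    ultimately show ?thesis by (simp add: u_def)
  qed
  have "sum_rate h s2 t n \<ge> (\<Sum>i\<in>{1,2,3}. log 2 (1 + (h i)\<^sup>2 / s2 i) - \<epsilon>/3)"
    unfolding sum_rate_def by (rule sum_mono) (rule trm)
  also have "(\<Sum>i\<in>{1,2,3::nat}. log 2 (1 + (h i)\<^sup>2 / s2 i) - \<epsilon>/3) = rate_bound h s2 - \<epsilon>"
    by (simp add: rate_bound_def sum_subtractf)
  finally show ?thesis using n0 by auto
qed


theorem lemma2:
  fixes M :: "'a measure" and tau :: "nat \<Rightarrow> nat \<Rightarrow> 'a \<Rightarrow> real"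
    and h :: "nat \<Rightarrow> real" and s2 :: "nat \<Rightarrow> real"
  assumes "prob_space M"
    and "prob_space.indep_vars M (\<lambda>_. borel) (\<lambda>(i, k). tau i k) ({1,2,3} \<times> {1,2,3})"
    and "\<And>i k. i \<in> {1,2,3} \<Longrightarrow> k \<in> {1,2,3} \<Longrightarrow> \<exists>f. distributed M lborel (tau i k) f"
    and "\<And>i. i \<in> {1,2,3} \<Longrightarrow> h i > 0"
    and "\<And>i. i \<in> {1,2,3} \<Longrightarrow> s2 i > 0"
  shows "AE \<omega> in M. \<forall>\<epsilon>>0. \<exists>n::nat. n > 0 \<and>
           sum_rate h s2 (\<lambda>i k. tau i k \<omega>) n \<ge> rate_bound h s2 - \<epsilon>"
proof -
  interpret prob_space M by fact
  define I where "I = ({1,2,3::nat} \<times> {1,2,3::nat})"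
  have ind: "indep_vars (\<lambda>_. borel) (\<lambda>(i, k). tau i k) I" using assms(2) by (simp add: I_def)
  have finI: "finite I" by (simp add: I_def)
  have key: "AE \<omega> in M. (\<Sum>p\<in>I. W p * (\<lambda>(i, k). tau i k) p \<omega>) \<noteq> 0"
    if v: "v \<in> I" and Wv: "W v \<noteq> 0" for v W
  proof -
    obtain i k where ik: "v = (i,k)" "i \<in> {1,2,3}" "k \<in> {1,2,3}" using v by (auto simp: I_def)
    obtain f where "distributed M lborel (tau i k) f" using assms(3)[OF ik(2,3)] by blast
    hence dens: "distributed M lborel ((\<lambda>(i, k). tau i k) v) f" using ik by simp
    show ?thesis by (rule lin_nonzero[of "\<lambda>(i, k). tau i k" I v f W, OF ind finI v dens Wv])
  qed
  define W where "W a b c d p = (if p=(1,1) then -b else if p=(2,2) then -c else if p=(3,3) then -d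
     else if p=(3,1) then -a else if p=(1,3) then a+b-c+d else if p=(1,2) then -a+c-d
     else if p=(2,1) then a+b else if p=(2,3) then -a-b+c else if p=(3,2) then a+d else (0::real))"
     for a b c d and p :: "nat \<times> nat"
  have Iexp: "I = {(1,1),(1,2),(1,3),(2,1),(2,2),(2,3),(3,1),(3,2),(3,3)}" by (auto simp: I_def)
  have lin: "(\<Sum>p\<in>I. W a b c d p * (\<lambda>(i, k). tau i k) p \<omega>) = a * S_sum (\<lambda>i k. tau i k \<omega>)
      + b * dtau (\<lambda>i k. tau i k \<omega>) 1 + c * dtau (\<lambda>i k. tau i k \<omega>) 2 + d * dtau (\<lambda>i k. tau i k \<omega>) 3"
    for a b c d \<omega>
    unfolding Iexp by (simp add: W_def S_sum_def dtau_def algebra_simps)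
  have each: "AE \<omega> in M. (case q of (a,b,c,d) \<Rightarrow> (a,b,c,d) \<noteq> (0,0,0,0) \<longrightarrow>
      of_int a * S_sum (\<lambda>i k. tau i k \<omega>) + of_int b * dtau (\<lambda>i k. tau i k \<omega>) 1
      + of_int c * dtau (\<lambda>i k. tau i k \<omega>) 2 + of_int d * dtau (\<lambda>i k. tau i k \<omega>) 3 \<noteq> 0)"
    for q :: "int \<times> int \<times> int \<times> int"
  proof -
    obtain a b c d where q: "q = (a,b,c,d)" by (cases q) auto
    show ?thesis
    proof (cases "(a,b,c,d) = (0,0,0,0)")
      case True thus ?thesis using q by simp
    next
      case False
      have "\<exists>v\<in>I. W (of_int a) (of_int b) (of_int c) (of_int d) v \<noteq> 0"
      proof (cases "a \<noteq> 0")
        case True thus ?thesis by (intro bexI[of _ "(3,1)"]) (auto simp: W_def I_def)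
      next
        case a: False
        show ?thesis
        proof (cases "b \<noteq> 0")
          case True thus ?thesis by (intro bexI[of _ "(1,1)"]) (auto simp: W_def I_def)
        next
          case b: False
          show ?thesis
          proof (cases "c \<noteq> 0")
            case True thus ?thesis by (intro bexI[of _ "(2,2)"]) (auto simp: W_def I_def)
          next
            case c: False
            with a b False have "d \<noteq> 0" by auto
            thus ?thesis by (intro bexI[of _ "(3,3)"]) (auto simp: W_def I_def)
          qed
        qed
      qed
      then obtain v where "v \<in> I" "W (of_int a) (of_int b) (of_int c) (of_int d) v \<noteq> 0" by blast
      from key[of v "W (of_int a) (of_int b) (of_int c) (of_int d)", OF this] show ?thesis
        by (rule eventually_mono) (simp add: q lin)
    qed
  qed
  have "AE \<omega> in M. \<forall>q::int \<times> int \<times> int \<times> int. (case q of (a,b,c,d) \<Rightarrow> (a,b,c,d) \<noteq> (0,0,0,0) \<longrightarrow>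
      of_int a * S_sum (\<lambda>i k. tau i k \<omega>) + of_int b * dtau (\<lambda>i k. tau i k \<omega>) 1
      + of_int c * dtau (\<lambda>i k. tau i k \<omega>) 2 + of_int d * dtau (\<lambda>i k. tau i k \<omega>) 3 \<noteq> 0)"
    by (subst AE_all_countable) (use each in blast)
  thus ?thesis
  proof (rule eventually_mono)
    fix \<omega> assume g: "\<forall>q::int \<times> int \<times> int \<times> int. (case q of (a,b,c,d) \<Rightarrow> (a,b,c,d) \<noteq> (0,0,0,0) \<longrightarrow>
      of_int a * S_sum (\<lambda>i k. tau i k \<omega>) + of_int b * dtau (\<lambda>i k. tau i k \<omega>) 1
      + of_int c * dtau (\<lambda>i k. tau i k \<omega>) 2 + of_int d * dtau (\<lambda>i k. tau i k \<omega>) 3 \<noteq> 0)"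
    show "\<forall>\<epsilon>>0. \<exists>n::nat. n > 0 \<and> sum_rate h s2 (\<lambda>i k. tau i k \<omega>) n \<ge> rate_bound h s2 - \<epsilon>"
    proof (intro allI impI)
      fix \<epsilon> :: real assume "\<epsilon> > 0"
      show "\<exists>n::nat. n > 0 \<and> sum_rate h s2 (\<lambda>i k. tau i k \<omega>) n \<ge> rate_bound h s2 - \<epsilon>"
      proof (rule det[OF _ assms(4,5) \<open>\<epsilon> > 0\<close>])
        fix a b c d :: int assume "(a,b,c,d) \<noteq> (0,0,0,0)"
        thus "of_int a * S_sum (\<lambda>i k. tau i k \<omega>) + of_int b * dtau (\<lambda>i k. tau i k \<omega>) 1
          + of_int c * dtau (\<lambda>i k. tau i k \<omega>) 2 + of_int d * dtau (\<lambda>i k. tau i k \<omega>) 3 \<noteq> 0"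
          using g[rule_format, of "(a,b,c,d)"] by simp
      qed
    qed
  qed
qed

end
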